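(* Let $N,n,d\ge 1$, $B>0$ and $\epsilon>0$. A dataset is $D=\{D_1,\dots,D_N\}$, where each voter $i\in\{1,\dots,N\}$ holds $D_i=\{\langle X_1^{(i)},Z_1^{(i)}\rangle,\dots,\langle X_n^{(i)},Z_n^{(i)}\rangle\}$ with $X_j^{(i)},Z_j^{(i)}\in\mathbb{R}^d$. For each voter let $$\mathcal{L}(\boldsymbol\beta,D_i)=\sum_{j=1}^n \ln\Phi\big(\boldsymbol\beta^\top (X_j^{(i)}-Z_j^{(i)})\big),\qquad \overline{\boldsymbol\beta}_i(D_i)\in\operatorname*{argmax}_{\boldsymbol\beta\in\mathbb{R}^d:\ \|\boldsymbol\beta\|_1\le B}\mathcal{L}(\boldsymbol\beta,D_i),$$ where $\Phi$ is the standard normal CDF and $\overline{\boldsymbol\beta}_i(D_i)$ is a (deterministically chosen) maximizer. Consider the randomized algorithm (Algorithm 1) that outputs $$\boldsymbol\beta^*(D)=\frac1N\sum_{i=1}^N\overline{\boldsymbol\beta}_i(D_i)+\boldsymbol R,$$ where $\boldsymbol R\in\mathbb{R}^d$ has independent coordinates, each distributed as a zero-mean Laplace random variable with scale $\frac{2B}{N\epsilon}$. Then this algorithm satisfies $\epsilon$-differential privacy both with respect to voter-neighboring datasets (VLCP) and with respect to record-neighboring datasets (RLCP).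
   Context: A randomized algorithm $Y$ satisfies $\epsilon$-differential privacy with respect to a neighboring relation if for every pair of neighboring datasets $D,D'$ and every measurable set $\mathcal{Y}$ of outputs, $\Pr[Y(D)\in\mathcal{Y}]\le e^{\epsilon}\Pr[Y(D')\in\mathcal{Y}]$. Two datasets $D=\{D_1,\dots,D_N\}$ and $D'=\{D_1',\dots,D_N'\}$ (each voter having exactly $n$ records in both) are voter-neighboring if they coincide except for the records of a single voter $i$, whose $n$ records may be changed arbitrarily; they are record-neighboring if they coincide except for a single record of a single voter. The Laplace distribution with scale $\lambda$ has density $\frac{1}{2\lambda}e^{-|x|/\lambda}$. *)

theory Defs
  imports "HOL-Probability.Probability"
begin

definition Phi :: "real \<Rightarrow> real" where
  "Phi = cdf (density lborel std_normal_density)"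

text \<open>A record is a pair (X, Z) of vectors in R^d; a voter's data is an indexed family
  of records (index type 'r, n = CARD('r)); a dataset is an indexed family of voters
  (index type 'v, N = CARD('v)).\<close>

definition l1norm :: "real ^ 'd \<Rightarrow> real" where
  "l1norm b = (\<Sum>k\<in>UNIV. \<bar>b $ k\<bar>)"

definition loglik :: "real ^ 'd \<Rightarrow> ('r::finite \<Rightarrow> (real ^ 'd) \<times> (real ^ 'd)) \<Rightarrow> real" where
  "loglik b Di = (\<Sum>j\<in>UNIV. ln (Phi (b \<bullet> (fst (Di j) - snd (Di j)))))"

definition is_argmax :: "real \<Rightarrow> ('r::finite \<Rightarrow> (real ^ 'd) \<times> (real ^ 'd)) \<Rightarrow> real ^ 'd \<Rightarrow> bool" where
  "is_argmax B Di b \<longleftrightarrow> l1norm b \<le> B \<and>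
     (\<forall>b'. l1norm b' \<le> B \<longrightarrow> loglik b' Di \<le> loglik b Di)"

definition laplace_density :: "real \<Rightarrow> real \<Rightarrow> real" where
  "laplace_density lam x = exp (- \<bar>x\<bar> / lam) / (2 * lam)"

definition laplace_vec :: "real \<Rightarrow> (real ^ 'd) measure" where
  "laplace_vec lam = density lborel (\<lambda>r. ennreal (\<Prod>k\<in>UNIV. laplace_density lam (r $ k)))"

definition algo1 :: "(('r::finite \<Rightarrow> (real ^ 'd) \<times> (real ^ 'd)) \<Rightarrow> real ^ 'd) \<Rightarrow> real \<Rightarrow> real
    \<Rightarrow> ('v::finite \<Rightarrow> 'r \<Rightarrow> (real ^ 'd) \<times> (real ^ 'd)) \<Rightarrow> (real ^ 'd) measure" where
  "algo1 sel B \<epsilon> D =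
     distr (laplace_vec (2 * B / (real CARD('v) * \<epsilon>))) borel
       (\<lambda>r. (1 / real CARD('v)) *\<^sub>R (\<Sum>i\<in>UNIV. sel (D i)) + r)"

definition diff_private :: "('a \<Rightarrow> 'b::topological_space measure) \<Rightarrow> ('a \<Rightarrow> 'a \<Rightarrow> bool) \<Rightarrow> real \<Rightarrow> bool" where
  "diff_private M nb \<epsilon> \<longleftrightarrow> (\<forall>D D'. nb D D' \<longrightarrow>
     (\<forall>Y\<in>sets borel. measure (M D) Y \<le> exp \<epsilon> * measure (M D') Y))"

definition voter_neighboring :: "('v \<Rightarrow> 'r \<Rightarrow> 'x) \<Rightarrow> ('v \<Rightarrow> 'r \<Rightarrow> 'x) \<Rightarrow> bool" where
  "voter_neighboring D D' \<longleftrightarrow> (\<exists>i. \<forall>i'. i' \<noteq> i \<longrightarrow> D i' = D' i')"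

definition record_neighboring :: "('v \<Rightarrow> 'r \<Rightarrow> 'x) \<Rightarrow> ('v \<Rightarrow> 'r \<Rightarrow> 'x) \<Rightarrow> bool" where
  "record_neighboring D D' \<longleftrightarrow> (\<exists>i j. \<forall>i' j'. (i', j') \<noteq> (i, j) \<longrightarrow> D i' j' = D' i' j')"

end

theory Submission
  imports Defs
begin

lemma lap_shift:
  assumes "lam > 0"
  shows "laplace_density lam (x + t) \<le> exp (\<bar>t\<bar> / lam) * laplace_density lam x"
proof -
  have "- \<bar>x + t\<bar> / lam \<le> \<bar>t\<bar> / lam + - \<bar>x\<bar> / lam"
    using assms by (simp add: divide_simps)
  hence "exp (- \<bar>x + t\<bar> / lam) \<le> exp (\<bar>t\<bar> / lam) * exp (- \<bar>x\<bar> / lam)"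
    by (simp add: exp_add[symmetric])
  thus ?thesis using assms unfolding laplace_density_def
    by (simp add: divide_right_mono)
qed

lemma lapvec_shift:
  fixes s c :: "real ^ 'd"
  assumes "lam > 0"
  shows "(\<Prod>k\<in>UNIV. laplace_density lam ((s + c) $ k))
     \<le> exp (l1norm c / lam) * (\<Prod>k\<in>UNIV. laplace_density lam (s $ k))"
proof -
  have "(\<Prod>k\<in>UNIV. laplace_density lam ((s + c) $ k))
     \<le> (\<Prod>k\<in>UNIV. exp (\<bar>c $ k\<bar> / lam) * laplace_density lam (s $ k))"
    apply (rule prod_mono)
    using lap_shift[OF assms] assms by (auto simp: laplace_density_def)
  also have "\<dots> = (\<Prod>k\<in>UNIV. exp (\<bar>c $ k\<bar> / lam)) * (\<Prod>k\<in>UNIV. laplace_density lam (s $ k))"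
    by (simp add: prod.distrib)
  also have "(\<Prod>k\<in>UNIV. exp (\<bar>c $ k\<bar> / lam)) = exp (l1norm c / lam)"
    by (simp add: l1norm_def exp_sum sum_divide_distrib)
  finally show ?thesis .
qed

lemma meas_f: "(\<lambda>r::real^'d. ennreal (\<Prod>k\<in>UNIV. laplace_density lam (r $ k))) \<in> borel_measurable borel"
  unfolding laplace_density_def by measurable

lemma key:
  fixes a b :: "real ^ 'd"
  assumes "lam > 0" "l1norm (b - a) \<le> e * lam" "Y \<in> sets borel"
  shows "emeasure (distr (laplace_vec lam) borel (\<lambda>r. a + r)) Y
     \<le> ennreal (exp e) * emeasure (distr (laplace_vec lam) borel (\<lambda>r. b + r)) Y"
proof -
  define f where "f = (\<lambda>r::real^'d. ennreal (\<Prod>k\<in>UNIV. laplace_density lam (r $ k)))"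
  have fm: "f \<in> borel_measurable borel" unfolding f_def by (rule meas_f)
  have sp: "space (laplace_vec lam) = UNIV" "sets (laplace_vec lam) = sets borel"
    by (simp_all add: laplace_vec_def)
  have E: "emeasure (distr (laplace_vec lam) borel (\<lambda>r. c + r)) Y
      = (\<integral>\<^sup>+ r. f r * indicator Y (c + r) \<partial>lborel)" for c
  proof -
    have "emeasure (distr (laplace_vec lam) borel (\<lambda>r. c + r)) Y
        = emeasure (laplace_vec lam) ((\<lambda>r. c + r) -` Y \<inter> space (laplace_vec lam))"
    proof (rule emeasure_distr)
      have "(\<lambda>r. c + r) \<in> borel_measurable (borel :: (real^'d) measure)" by simp
      thus "(\<lambda>r. c + r) \<in> borel_measurable (laplace_vec lam)"
        using measurable_cong_sets[OF sp(2) refl] by blast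
    qed (use assms(3) in auto)
    also have "\<dots> = (\<integral>\<^sup>+ r. f r * indicator ((\<lambda>r. c + r) -` Y) r \<partial>lborel)"
    proof -
      have "(+) c -` Y \<inter> space borel \<in> sets borel"
        by (rule measurable_sets[OF _ assms(3)]) simp
      thus ?thesis unfolding laplace_vec_def f_def
        by (subst emeasure_density) (use meas_f in auto)
    qed
    finally show ?thesis by (simp add: indicator_def)
  qed
  have gm: "(\<lambda>r. f r * indicator Y (a + r)) \<in> borel_measurable borel"
    using fm assms(3) by measurable
  have "(\<integral>\<^sup>+ r. f r * indicator Y (a + r) \<partial>lborel)
      = (\<integral>\<^sup>+ r. f r * indicator Y (a + r) \<partial>(distr lborel borel ((+) (b - a))))"
    by (simp add: lborel_distr_plus)
  also have "\<dots> = (\<integral>\<^sup>+ s. f (b - a + s) * indicator Y (a + (b - a + s)) \<partial>lborel)"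
    by (subst nn_integral_distr) (use gm in auto)
  also have "\<dots> = (\<integral>\<^sup>+ s. f (s + (b - a)) * indicator Y (b + s) \<partial>lborel)"
    by (simp add: algebra_simps)
  also have "\<dots> \<le> (\<integral>\<^sup>+ s. ennreal (exp e) * (f s * indicator Y (b + s)) \<partial>lborel)"
  proof (rule nn_integral_mono)
    fix s
    have "(\<Prod>k\<in>UNIV. laplace_density lam ((s + (b - a)) $ k))
       \<le> exp (l1norm (b - a) / lam) * (\<Prod>k\<in>UNIV. laplace_density lam (s $ k))"
      by (rule lapvec_shift[OF assms(1)])
    also have "\<dots> \<le> exp e * (\<Prod>k\<in>UNIV. laplace_density lam (s $ k))"
      apply (rule mult_right_mono)
      using assms by (auto simp: laplace_density_def prod_nonneg pos_divide_le_eq)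
    finally have "f (s + (b - a)) \<le> ennreal (exp e) * f s"
      unfolding f_def by (simp add: ennreal_mult'[symmetric] ennreal_leI)
    thus "f (s + (b - a)) * indicator Y (b + s) \<le> ennreal (exp e) * (f s * indicator Y (b + s))"
      by (auto simp: indicator_def)
  qed
  also have "\<dots> = ennreal (exp e) * (\<integral>\<^sup>+ s. f s * indicator Y (b + s) \<partial>lborel)"
    by (rule nn_integral_cmult) (use fm assms(3) in measurable)
  finally show ?thesis using E by simp
qed

lemma enn_fin:
  fixes x y :: ennreal
  assumes "x \<le> ennreal c * y" "y \<le> ennreal c * x" "c \<ge> 0"
  shows "enn2real x \<le> c * enn2real y"
proof (cases "y = top")
  case True
  then have "x = top" using assms(2) by (auto simp: ennreal_mult_eq_top_iff top_unique)
  then show ?thesis using True by simp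
next
  case False
  have "enn2real x \<le> enn2real (ennreal c * y)"
    using assms(1) False by (intro enn2real_mono) (auto simp: ennreal_mult_less_top less_top[symmetric] ennreal_mult_eq_top_iff)
  also have "\<dots> = c * enn2real y" using assms(3) by (simp add: enn2real_mult)
  finally show ?thesis .
qed

lemma l1_scale: "l1norm (c *\<^sub>R x) = \<bar>c\<bar> * l1norm x"
  by (simp add: l1norm_def sum_distrib_left abs_mult)

lemma l1_diff: "l1norm (x - y) \<le> l1norm x + l1norm y"
  unfolding l1norm_def sum.distrib[symmetric] by (rule sum_mono) auto

lemma voter_dp:
  fixes sel :: "('r::finite \<Rightarrow> (real ^ 'd) \<times> (real ^ 'd)) \<Rightarrow> real ^ 'd"
    and B \<epsilon> :: real
  assumes "B > 0" and "\<epsilon> > 0"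
    and sel: "\<And>Di. is_argmax B Di (sel Di)"
  shows "diff_private (algo1 sel B \<epsilon> :: ('v::finite \<Rightarrow> 'r \<Rightarrow> (real ^ 'd) \<times> (real ^ 'd)) \<Rightarrow> _)
           voter_neighboring \<epsilon>"
  unfolding diff_private_def
proof (intro allI impI ballI)
  fix D D' :: "'v \<Rightarrow> 'r \<Rightarrow> (real ^ 'd) \<times> (real ^ 'd)" and Y :: "(real^'d) set"
  assume nb: "voter_neighboring D D'" and Y: "Y \<in> sets borel"
  then obtain i where i: "\<And>i'. i' \<noteq> i \<Longrightarrow> D i' = D' i'"
    unfolding voter_neighboring_def by blast
  define N where "N = real CARD('v)"
  have N: "N > 0" unfolding N_def by simp
  define lam where "lam = 2 * B / (N * \<epsilon>)"
  have lam: "lam > 0" using N assms unfolding lam_def by simp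
  define a where "a = (1 / N) *\<^sub>R (\<Sum>i\<in>UNIV. sel (D i))"
  define b where "b = (1 / N) *\<^sub>R (\<Sum>i\<in>UNIV. sel (D' i))"
  have bnd: "l1norm (sel X) \<le> B" for X using sel[of X] unfolding is_argmax_def by blast
  have sums: "(\<Sum>i\<in>UNIV. sel (D i)) - (\<Sum>i\<in>UNIV. sel (D' i)) = sel (D i) - sel (D' i)"
  proof -
    have "(\<Sum>i\<in>UNIV. sel (D i)) = sel (D i) + (\<Sum>j\<in>UNIV - {i}. sel (D j))"
      by (simp add: sum.remove)
    moreover have "(\<Sum>i\<in>UNIV. sel (D' i)) = sel (D' i) + (\<Sum>j\<in>UNIV - {i}. sel (D' j))"
      by (simp add: sum.remove)
    moreover have "(\<Sum>j\<in>UNIV - {i}. sel (D j)) = (\<Sum>j\<in>UNIV - {i}. sel (D' j))"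
      using i by (intro sum.cong) auto
    ultimately show ?thesis by simp
  qed
  have ab: "a - b = (1 / N) *\<^sub>R (sel (D i) - sel (D' i))"
    unfolding a_def b_def sums[symmetric] by (simp add: scaleR_diff_right)
  have eq: "\<epsilon> * lam = (1 / N) * (2 * B)" unfolding lam_def using assms N by (simp add: field_simps)
  have d1: "l1norm (a - b) \<le> \<epsilon> * lam"
  proof -
    have "l1norm (sel (D i) - sel (D' i)) \<le> 2 * B"
      using l1_diff[of "sel (D i)" "sel (D' i)"] bnd[of "D i"] bnd[of "D' i"] by linarith
    moreover have "\<bar>1 / N\<bar> = 1 / N" using N by simp
    ultimately have "\<bar>1 / N\<bar> * l1norm (sel (D i) - sel (D' i)) \<le> 1 / N * (2 * B)"
      using N by (simp add: divide_right_mono)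
    then show ?thesis unfolding ab l1_scale eq .
  qed
  have d2: "l1norm (b - a) \<le> \<epsilon> * lam"
  proof -
    have "b - a = (-1) *\<^sub>R (a - b)" by simp
    then show ?thesis using d1 by (simp only: l1_scale)
  qed
  have A: "algo1 sel B \<epsilon> D = distr (laplace_vec lam) borel (\<lambda>r. a + r)"
    "algo1 sel B \<epsilon> D' = distr (laplace_vec lam) borel (\<lambda>r. b + r)"
    unfolding algo1_def a_def b_def lam_def N_def by simp_all
  show "measure (algo1 sel B \<epsilon> D) Y \<le> exp \<epsilon> * measure (algo1 sel B \<epsilon> D') Y"
    unfolding A measure_def
    by (rule enn_fin[OF key[OF lam d2 Y] key[OF lam d1 Y]]) simp
qed

theorem theorem1:
  fixes sel :: "('r::finite \<Rightarrow> (real ^ 'd) \<times> (real ^ 'd)) \<Rightarrow> real ^ 'd"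
    and B \<epsilon> :: real
  assumes "B > 0" and "\<epsilon> > 0"
    and "\<And>Di. is_argmax B Di (sel Di)"
  shows "diff_private (algo1 sel B \<epsilon> :: ('v::finite \<Rightarrow> 'r \<Rightarrow> (real ^ 'd) \<times> (real ^ 'd)) \<Rightarrow> _)
           voter_neighboring \<epsilon>
       \<and> diff_private (algo1 sel B \<epsilon> :: ('v::finite \<Rightarrow> 'r \<Rightarrow> (real ^ 'd) \<times> (real ^ 'd)) \<Rightarrow> _)
           record_neighboring \<epsilon>"
proof
  show V: "diff_private (algo1 sel B \<epsilon> :: ('v::finite \<Rightarrow> 'r \<Rightarrow> (real ^ 'd) \<times> (real ^ 'd)) \<Rightarrow> _)
           voter_neighboring \<epsilon>" by (rule voter_dp[OF assms])
  have "record_neighboring D D' \<Longrightarrow> voter_neighboring D D'"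
    for D D' :: "'v \<Rightarrow> 'r \<Rightarrow> (real ^ 'd) \<times> (real ^ 'd)"
  proof -
    assume "record_neighboring D D'"
    then obtain i j where h: "\<And>i' j'. (i', j') \<noteq> (i, j) \<Longrightarrow> D i' j' = D' i' j'"
      unfolding record_neighboring_def by blast
    have "\<forall>i'. i' \<noteq> i \<longrightarrow> D i' = D' i'" using h by auto
    then show ?thesis unfolding voter_neighboring_def by blast
  qed
  then show "diff_private (algo1 sel B \<epsilon> :: ('v::finite \<Rightarrow> 'r \<Rightarrow> (real ^ 'd) \<times> (real ^ 'd)) \<Rightarrow> _)
           record_neighboring \<epsilon>"
    using V unfolding diff_private_def by blast
qed

end
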